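(* Let $S_0,S_1,S_2,S_3$ be $3$-stars, let $G_0=S_0$ and for $i\in\{1,2,3\}$ let $G_i=G_{i-1}\rhd_{v_{i-1}}S_i$, where $v_{i-1}$ is a vertex of $G_{i-1}$. If $Z=G_3$ has maximum degree at most $3$ and diameter $8$, then $Z$ is unique up to isomorphism.
   Context: A 3-star is $K_{1,3}$. For a graph $G'$, a vertex $v$ of $G'$ and a star $S$, $G'\rhd_v S$ is the graph obtained from the disjoint union of $G'$ and $S$ by identifying $v$ with a leaf of $S$. *)

theory Defs
  imports Main
begin

text \<open>Finite simple graphs as a pair (vertex set, edge set); edges are 2-element sets.\<close>
type_synonym 'a graph = "'a set \<times> 'a set set"

definition verts :: "'a graph \<Rightarrow> 'a set" where "verts G = fst G"
definition edges :: "'a graph \<Rightarrow> 'a set set" where "edges G = snd G"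

definition simple_graph :: "'a graph \<Rightarrow> bool" where
  "simple_graph G \<longleftrightarrow> finite (verts G) \<and>
     (\<forall>e\<in>edges G. \<exists>x y. x \<noteq> y \<and> e = {x, y} \<and> x \<in> verts G \<and> y \<in> verts G)"

definition degree :: "'a graph \<Rightarrow> 'a \<Rightarrow> nat" where
  "degree G v = card {e \<in> edges G. v \<in> e}"

definition max_degree_le :: "'a graph \<Rightarrow> nat \<Rightarrow> bool" where
  "max_degree_le G k \<longleftrightarrow> (\<forall>v\<in>verts G. degree G v \<le> k)"

definition is_star3 :: "'a graph \<Rightarrow> bool" where
  "is_star3 S \<longleftrightarrow> (\<exists>c a b d. distinct [c, a, b, d] \<and> verts S = {c, a, b, d} \<and>
      edges S = {{c, a}, {c, b}, {c, d}})"

text \<open>H is (a copy of) the graph obtained from the disjoint union of G and S by identifying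
  the vertex v of G with a leaf l of S: G and S are embedded injectively into H, their
  images meet exactly in the identified vertex, and H has exactly the images of the vertices
  and edges of G and S.\<close>
definition attach :: "'a graph \<Rightarrow> 'a \<Rightarrow> 's graph \<Rightarrow> 'a graph \<Rightarrow> bool" where
  "attach G v S H \<longleftrightarrow> v \<in> verts G \<and>
     (\<exists>f g l. inj_on f (verts G) \<and> inj_on g (verts S) \<and> l \<in> verts S \<and> degree S l = 1 \<and>
        g l = f v \<and> f ` verts G \<inter> g ` verts S = {f v} \<and>
        verts H = f ` verts G \<union> g ` verts S \<and>
        edges H = (image f) ` edges G \<union> (image g) ` edges S)"

definition star_chain3 :: "'a graph \<Rightarrow> bool" where
  "star_chain3 Z \<longleftrightarrow> (\<exists>(S0::'a graph) (S1::'a graph) (S2::'a graph) (S3::'a graph)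
      (G0::'a graph) G1 G2 v0 v1 v2.
      is_star3 S0 \<and> is_star3 S1 \<and> is_star3 S2 \<and> is_star3 S3 \<and>
      G0 = S0 \<and> attach G0 v0 S1 G1 \<and> attach G1 v1 S2 G2 \<and> attach G2 v2 S3 Z)"

definition walk :: "'a graph \<Rightarrow> 'a list \<Rightarrow> bool" where
  "walk G xs \<longleftrightarrow> xs \<noteq> [] \<and> set xs \<subseteq> verts G \<and>
     (\<forall>i. Suc i < length xs \<longrightarrow> {xs ! i, xs ! Suc i} \<in> edges G)"

definition dist :: "'a graph \<Rightarrow> 'a \<Rightarrow> 'a \<Rightarrow> nat" where
  "dist G u v = (LEAST n. \<exists>xs. walk G xs \<and> hd xs = u \<and> last xs = v \<and> length xs = Suc n)"

definition connected_graph :: "'a graph \<Rightarrow> bool" where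
  "connected_graph G \<longleftrightarrow> (\<forall>u\<in>verts G. \<forall>v\<in>verts G. \<exists>xs. walk G xs \<and> hd xs = u \<and> last xs = v)"

definition diameter :: "'a graph \<Rightarrow> nat" where
  "diameter G = Max {dist G u v | u v. u \<in> verts G \<and> v \<in> verts G}"

definition graph_iso :: "'a graph \<Rightarrow> 'b graph \<Rightarrow> bool" where
  "graph_iso G H \<longleftrightarrow> (\<exists>f. bij_betw f (verts G) (verts H) \<and>
     (\<forall>x\<in>verts G. \<forall>y\<in>verts G. {x, y} \<in> edges G \<longleftrightarrow> {f x, f y} \<in> edges H))"

end

theory Submission
  imports Defs
begin

definition mk :: "nat \<times> nat \<Rightarrow> nat set" where "mk p = {fst p, snd p}"
definition gr :: "nat \<Rightarrow> (nat \<times> nat) list \<Rightarrow> nat graph" where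
 "gr n es = ({0..<n}, mk ` set es)"
definition esC :: "nat \<Rightarrow> nat \<Rightarrow> nat \<Rightarrow> (nat \<times> nat) list" where
 "esC v0 v1 v2 = [(0,1),(0,2),(0,3),(v0,4),(4,5),(4,6),(v1,7),(7,8),(7,9),(v2,10),(10,11),(10,12)]"
fun nbrs :: "nat list \<Rightarrow> (nat \<times> nat) list \<Rightarrow> nat list" where
 "nbrs R [] = []"
| "nbrs R ((a,b)#es) = (if a \<in> set R then [b] else []) @ (if b \<in> set R then [a] else []) @ nbrs R es"
definition stp :: "(nat \<times> nat) list \<Rightarrow> nat list \<Rightarrow> nat list" where
 "stp es R = remdups (R @ nbrs R es)"
fun reach :: "(nat \<times> nat) list \<Rightarrow> nat \<Rightarrow> nat \<Rightarrow> nat list" where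
 "reach es 0 u = [u]"
| "reach es (Suc k) u = stp es (reach es k u)"
fun allin :: "'x list \<Rightarrow> 'x list \<Rightarrow> bool" where
 "allin [] ys = True"
| "allin (x#xs) ys = (x \<in> set ys \<and> allin xs ys)"
definition degcnt :: "nat \<Rightarrow> (nat \<times> nat) list \<Rightarrow> nat" where
 "degcnt x es = card (set (map mk (filter (\<lambda>p. fst p = x \<or> snd p = x) es)))"
fun degL :: "(nat \<times> nat) list \<Rightarrow> nat list \<Rightarrow> bool" where
 "degL es [] = False"
| "degL es (x#xs) = (4 \<le> degcnt x es \<or> degL es xs)"
definition ccheck :: "(nat \<times> nat) list \<Rightarrow> nat \<times> nat \<Rightarrow> bool" where
 "ccheck es z = (z \<in> set es \<and> allin [0..<13] (reach es 3 (fst z) @ reach es 3 (snd z)))"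
definition nrm :: "nat \<times> nat \<Rightarrow> nat \<times> nat" where "nrm p = (min (fst p) (snd p), max (fst p) (snd p))"
fun emap :: "nat list \<Rightarrow> (nat \<times> nat) list \<Rightarrow> (nat \<times> nat) list" where
 "emap p [] = []"
| "emap p ((a,b)#es) = nrm (p!a, p!b) # emap p es"
definition isocheck :: "nat list \<Rightarrow> (nat \<times> nat) list \<Rightarrow> bool" where
 "isocheck p es = (length p = 13 \<and> allin p [0..<13] \<and> allin [0..<13] p \<and> allin (emap p es) (emap [0..<13] (esC 1 5 8)) \<and> allin (emap [0..<13] (esC 1 5 8)) (emap p es))"
definition wtab :: "((nat \<times> nat \<times> nat) \<times> nat list) list" where
 "wtab = [((1,2,5),[4,5,1,6,7,8,9,0,2,3,10,11,12]), ((1,2,6),[4,5,1,6,7,9,8,0,2,3,10,11,12]), ((1,2,8),[4,1,5,6,0,2,3,7,8,9,10,11,12]), ((1,2,9),[4,1,5,6,0,2,3,7,9,8,10,11,12]), ((1,3,5),[4,5,6,1,7,8,9,0,2,3,10,11,12]), ((1,3,6),[4,5,6,1,7,9,8,0,2,3,10,11,12]), ((1,3,8),[4,1,6,5,0,2,3,7,8,9,10,11,12]), ((1,3,9),[4,1,6,5,0,2,3,7,9,8,10,11,12]), ((1,5,2),[4,5,1,6,7,8,9,10,11,12,0,2,3]), ((1,5,3),[4,5,6,1,7,8,9,10,11,12,0,2,3]), ((1,5,8),[0,1,2,3,4,5,6,7,8,9,10,11,12]), ((1,5,9),[0,1,2,3,4,5,6,7,9,8,10,11,12]), ((1,6,2),[4,5,1,6,7,9,8,10,11,12,0,2,3]),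 ((1,6,3),[4,5,6,1,7,9,8,10,11,12,0,2,3]), ((1,6,8),[0,1,2,3,4,6,5,7,8,9,10,11,12]), ((1,6,9),[0,1,2,3,4,6,5,7,9,8,10,11,12]), ((2,1,5),[4,1,5,6,7,8,9,0,2,3,10,11,12]), ((2,1,6),[4,1,5,6,7,9,8,0,2,3,10,11,12]), ((2,1,8),[4,5,1,6,0,2,3,7,8,9,10,11,12]), ((2,1,9),[4,5,1,6,0,2,3,7,9,8,10,11,12]), ((2,3,5),[4,6,5,1,7,8,9,0,2,3,10,11,12]), ((2,3,6),[4,6,5,1,7,9,8,0,2,3,10,11,12]), ((2,3,8),[4,6,1,5,0,2,3,7,8,9,10,11,12]), ((2,3,9),[4,6,1,5,0,2,3,7,9,8,10,11,12]), ((2,5,1),[4,1,5,6,7,8,9,10,11,12,0,2,3]), ((2,5,3),[4,6,5,1,7,8,9,10,11,12,0,2,3]), ((2,5,8),[0,2,1,3,4,5,6,7,8,9,10,11,12]), ((2,5,9),[0,2,1,3,4,5,6,7,9,8,10,11,12]), ((2,6,1),[4,1,5,6,7,9,8,10,11,12,0,2,3]), ((2,6,3),[4,6,5,1,7,9,8,10,11,12,0,2,3]), ((2,6,8),[0,2,1,3,4,6,5,7,8,9,10,11,12]), ((2,6,9),[0,2,1,3,4,6,5,7,9,8,10,11,12]), ((3,1,5),[4,1,6,5,7,8,9,0,2,3,10,11,12]), ((3,1,6),[4,1,6,5,7,9,8,0,2,3,10,11,12]), ((3,1,8),[4,5,6,1,0,2,3,7,8,9,10,11,12]), ((3,1,9),[4,5,6,1,0,2,3,7,9,8,10,11,12]),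 ((3,2,5),[4,6,1,5,7,8,9,0,2,3,10,11,12]), ((3,2,6),[4,6,1,5,7,9,8,0,2,3,10,11,12]), ((3,2,8),[4,6,5,1,0,2,3,7,8,9,10,11,12]), ((3,2,9),[4,6,5,1,0,2,3,7,9,8,10,11,12]), ((3,5,1),[4,1,6,5,7,8,9,10,11,12,0,2,3]), ((3,5,2),[4,6,1,5,7,8,9,10,11,12,0,2,3]), ((3,5,8),[0,2,3,1,4,5,6,7,8,9,10,11,12]), ((3,5,9),[0,2,3,1,4,5,6,7,9,8,10,11,12]), ((3,6,1),[4,1,6,5,7,9,8,10,11,12,0,2,3]), ((3,6,2),[4,6,1,5,7,9,8,10,11,12,0,2,3]), ((3,6,8),[0,2,3,1,4,6,5,7,8,9,10,11,12]), ((3,6,9),[0,2,3,1,4,6,5,7,9,8,10,11,12])]"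
definition ctab :: "((nat \<times> nat \<times> nat) \<times> (nat \<times> nat)) list" where
 "ctab = [((1,1,2),(0,1)), ((1,1,3),(0,1)), ((1,1,5),(1,4)), ((1,1,6),(1,4)), ((1,1,8),(1,7)), ((1,1,9),(1,7)), ((1,2,1),(0,1)), ((1,2,2),(0,1)), ((1,2,3),(0,1)), ((1,3,1),(0,1)), ((1,3,2),(0,1)), ((1,3,3),(0,1)), ((1,5,1),(1,4)), ((1,5,5),(1,4)), ((1,5,6),(1,4)), ((1,6,1),(1,4)), ((1,6,5),(1,4)), ((1,6,6),(1,4)), ((2,1,1),(0,1)), ((2,1,2),(0,1)), ((2,1,3),(0,1)), ((2,2,1),(0,1)), ((2,2,3),(0,1)), ((2,2,5),(2,4)), ((2,2,6),(2,4)), ((2,2,8),(2,7)), ((2,2,9),(2,7)), ((2,3,1),(0,1)), ((2,3,2),(0,1)), ((2,3,3),(0,1)), ((2,5,2),(2,4)), ((2,5,5),(2,4)), ((2,5,6),(2,4)), ((2,6,2),(2,4)), ((2,6,5),(2,4)), ((2,6,6),(2,4)), ((3,1,1),(0,1)), ((3,1,2),(0,1)), ((3,1,3),(0,1)), ((3,2,1),(0,1)), ((3,2,2),(0,1)), ((3,2,3),(0,1)), ((3,3,1),(0,1)), ((3,3,2),(0,1)), ((3,3,5),(3,4)), ((3,3,6),(3,4)), ((3,3,8),(3,7)), ((3,3,9),(3,7)), ((3,5,3),(3,4)), ((3,5,5),(3,4)), ((3,5,6),(3,4)), ((3,6,3),(3,4)), ((3,6,5),(3,4)), ((3,6,6)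,(3,4))]"
definition checkall :: "nat \<Rightarrow> nat \<Rightarrow> nat \<Rightarrow> bool" where
 "checkall v0 v1 v2 = (case map_of wtab (v0,v1,v2) of Some p \<Rightarrow> isocheck p (esC v0 v1 v2)
    | None \<Rightarrow> (case map_of ctab (v0,v1,v2) of Some z \<Rightarrow> ccheck (esC v0 v1 v2) z
    | None \<Rightarrow> degL (esC v0 v1 v2) [0..<13]))"
fun chk2 :: "nat \<Rightarrow> nat \<Rightarrow> nat list \<Rightarrow> bool" where
 "chk2 v0 v1 [] = True" | "chk2 v0 v1 (v2#vs) = (checkall v0 v1 v2 \<and> chk2 v0 v1 vs)"
fun chk1 :: "nat \<Rightarrow> nat list \<Rightarrow> bool" where
 "chk1 v0 [] = True" | "chk1 v0 (v1#vs) = (chk2 v0 v1 [0..<10] \<and> chk1 v0 vs)"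
fun chk0 :: "nat list \<Rightarrow> bool" where
 "chk0 [] = True" | "chk0 (v0#vs) = (chk1 v0 [0..<7] \<and> chk0 vs)"

lemma chk_0: "chk1 0 [0..<7]" by code_simp
lemma chk_1: "chk1 1 [0..<7]" by code_simp
lemma chk_2: "chk1 2 [0..<7]" by code_simp
lemma chk_3: "chk1 3 [0..<7]" by code_simp



lemma walk_Cons: "walk G (x # xs) \<longleftrightarrow> x \<in> verts G \<and> (xs = [] \<or> ({x, hd xs} \<in> edges G \<and> walk G xs))"
proof (cases xs)
  case Nil
  then show ?thesis by (auto simp: walk_def)
next
  case (Cons y ys)
  have "(\<forall>i. Suc i < length (x # y # ys) \<longrightarrow> {(x # y # ys) ! i, (x # y # ys) ! Suc i} \<in> edges G)
    \<longleftrightarrow> {x, y} \<in> edges G \<and> (\<forall>i. Suc i < length (y # ys) \<longrightarrow> {(y # ys) ! i, (y # ys) ! Suc i} \<in> edges G)"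
    (is "?L \<longleftrightarrow> ?R")
  proof
    assume ?L
    then show ?R by (metis Suc_less_eq length_Cons nth_Cons_0 nth_Cons_Suc zero_less_Suc)
  next
    assume r: ?R
    show ?L
    proof (intro allI impI)
      fix i assume "Suc i < length (x # y # ys)"
      then show "{(x # y # ys) ! i, (x # y # ys) ! Suc i} \<in> edges G"
        using r by (cases i) auto
    qed
  qed
  then show ?thesis using Cons by (auto simp: walk_def)
qed

lemma walk_single: "walk G [x] \<longleftrightarrow> x \<in> verts G"
  by (simp add: walk_Cons)

lemma walk_join: "walk G xs \<Longrightarrow> walk G ys \<Longrightarrow> last xs = hd ys \<Longrightarrow> walk G (xs @ tl ys)"
proof (induction xs)
  case Nil
  then show ?case by (simp add: walk_def)
next
  case (Cons x xs)
  note IH = Cons.IH and P = Cons.prems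
  show ?case
  proof (cases xs)
    case Nil
    then show ?thesis using Cons.prems by (cases ys) auto
  next
    case (Cons y zs)
    then show ?thesis using Cons.prems Cons.IH by (auto simp: walk_Cons)
  qed
qed

lemma walk_rev: "walk G xs \<Longrightarrow> walk G (rev xs)"
proof (induction xs)
  case Nil
  then show ?case by (simp add: walk_def)
next
  case (Cons x xs)
  note IH = Cons.IH and P = Cons.prems
  show ?case
  proof (cases xs)
    case Nil
    then show ?thesis using Cons.prems by (simp add: walk_single)
  next
    case (Cons y zs)
    have w: "walk G (rev xs)" using P IH Cons by (auto simp: walk_Cons)
    have e: "walk G [y, x]" using P Cons by (auto simp: walk_Cons insert_commute)
    have "walk G (rev xs @ tl [y, x])"
      by (rule walk_join[OF w e]) (simp add: Cons)
    then show ?thesis by simp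
  qed
qed


definition path :: "'a graph \<Rightarrow> 'a \<Rightarrow> 'a \<Rightarrow> nat \<Rightarrow> bool" where
  "path G u w k \<longleftrightarrow> (\<exists>xs. walk G xs \<and> hd xs = u \<and> last xs = w \<and> length xs \<le> Suc k)"

lemma path_trans: "path G u v k1 \<Longrightarrow> path G v w k2 \<Longrightarrow> path G u w (k1 + k2)"
proof -
  assume "path G u v k1" "path G v w k2"
  then obtain xs ys where x: "walk G xs" "hd xs = u" "last xs = v" "length xs \<le> Suc k1"
    and y: "walk G ys" "hd ys = v" "last ys = w" "length ys \<le> Suc k2"
    unfolding path_def by blast
  have ne: "xs \<noteq> []" "ys \<noteq> []" using x y by (auto simp: walk_def)
  have "walk G (xs @ tl ys)" using walk_join[OF x(1) y(1)] x(3) y(2) by simp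
  moreover have "hd (xs @ tl ys) = u" using ne x by simp
  moreover have "last (xs @ tl ys) = w" using ne x y
    by (cases ys) (auto simp: last_append)
  moreover have "length (xs @ tl ys) \<le> Suc (k1 + k2)" using x y ne by (cases ys) auto
  ultimately show ?thesis unfolding path_def by blast
qed

lemma path_sym: "path G u v k \<Longrightarrow> path G v u k"
  unfolding path_def
  by (metis walk_rev hd_rev last_rev length_rev)

lemma path_mono: "path G u v k \<Longrightarrow> k \<le> k' \<Longrightarrow> path G u v k'"
  unfolding path_def by fastforce

lemma path_edge: "{u, v} \<in> edges G \<Longrightarrow> u \<in> verts G \<Longrightarrow> v \<in> verts G \<Longrightarrow> path G u v 1"
  unfolding path_def
  by (rule exI[of _ "[u, v]"]) (auto simp: walk_Cons)

lemma path_refl: "u \<in> verts G \<Longrightarrow> path G u u 0"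
  unfolding path_def
  by (rule exI[of _ "[u]"]) (auto simp: walk_Cons)

lemma dist_le: "path G u v k \<Longrightarrow> dist G u v \<le> k"
proof -
  assume "path G u v k"
  then obtain xs where x: "walk G xs" "hd xs = u" "last xs = v" "length xs \<le> Suc k"
    unfolding path_def by blast
  have ne: "xs \<noteq> []" using x by (auto simp: walk_def)
  then have "length xs = Suc (length xs - 1)" by simp
  then have "dist G u v \<le> length xs - 1"
    unfolding dist_def using x by (intro Least_le) blast
  then show ?thesis using x by simp
qed

lemma gr_simps [simp]: "verts (gr n es) = {0..<n}" "edges (gr n es) = mk ` set es"
  by (simp_all add: gr_def verts_def edges_def)

lemma allin_iff: "allin xs ys \<longleftrightarrow> set xs \<subseteq> set ys"
  by (induction xs) auto

lemma nbrs_set: "y \<in> set (nbrs R es) \<Longrightarrow> \<exists>x\<in>set R. (x, y) \<in> set es \<or> (y, x) \<in> set es"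
  by (induction R es rule: nbrs.induct) (auto split: if_splits)

lemma reach_path:
  assumes bnd: "\<forall>p\<in>set es. fst p < n \<and> snd p < n" and u: "u < n"
  shows "y \<in> set (reach es k u) \<Longrightarrow> path (gr n es) u y k"
proof (induction k arbitrary: y)
  case 0
  then show ?case using u by (auto intro: path_refl)
next
  case (Suc k)
  then have "y \<in> set (reach es k u) \<or> y \<in> set (nbrs (reach es k u) es)"
    by (auto simp: stp_def)
  then show ?case
  proof
    assume "y \<in> set (reach es k u)"
    then show ?thesis using Suc.IH path_mono by fastforce
  next
    assume "y \<in> set (nbrs (reach es k u) es)"
    then obtain x where x: "x \<in> set (reach es k u)" and e: "(x, y) \<in> set es \<or> (y, x) \<in> set es"
      using nbrs_set by blast
    have "path (gr n es) x y 1"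
    proof (rule path_edge)
      show "{x, y} \<in> edges (gr n es)" using e
        by (auto simp: mk_def image_iff insert_commute intro: bexI[of _ "(x,y)"] bexI[of _ "(y,x)"])
      show "x \<in> verts (gr n es)" "y \<in> verts (gr n es)" using e bnd by auto
    qed
    then have "path (gr n es) u y (k + 1)" using path_trans[OF Suc.IH[OF x]] by blast
    then show ?thesis by simp
  qed
qed

lemma center_path:
  assumes bnd: "\<forall>p\<in>set es. fst p < 13 \<and> snd p < 13" and c: "ccheck es z"
    and u: "u < 13" and w: "w < 13"
  shows "path (gr 13 es) u w 7"
proof -
  obtain a b where z: "z = (a, b)" by (cases z)
  have zin: "(a, b) \<in> set es" and cov: "set [0..<13] \<subseteq> set (reach es 3 a) \<union> set (reach es 3 b)"
    using c z by (auto simp: ccheck_def allin_iff)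
  have ab: "a < 13" "b < 13" using zin bnd by auto
  have eab: "path (gr 13 es) a b 1"
    by (rule path_edge) (use zin ab in \<open>auto simp: mk_def image_iff intro: bexI[of _ "(a,b)"]\<close>)
  have near: "\<exists>c\<in>{a, b}. path (gr 13 es) c x 3" if "x < 13" for x
  proof -
    have "x \<in> set (reach es 3 a) \<or> x \<in> set (reach es 3 b)" using cov that by auto
    then show ?thesis using reach_path[OF bnd ab(1)] reach_path[OF bnd ab(2)] by blast
  qed
  obtain c1 where c1: "c1 \<in> {a, b}" "path (gr 13 es) c1 u 3" using near u by blast
  obtain c2 where c2: "c2 \<in> {a, b}" "path (gr 13 es) c2 w 3" using near w by blast
  have uc1: "path (gr 13 es) u c1 3" using path_sym[OF c1(2)] .
  have mid: "path (gr 13 es) c1 c2 1"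
  proof (cases "c1 = c2")
    case True
    then show ?thesis using c1 ab path_refl[of c1 "gr 13 es"] path_mono by fastforce
  next
    case False
    then show ?thesis using c1(1) c2(1) eab path_sym[OF eab] by auto
  qed
  have "path (gr 13 es) u w (3 + 1 + 3)" using path_trans[OF path_trans[OF uc1 mid] c2(2)] .
  then show ?thesis by simp
qed


definition siso :: "'a graph \<Rightarrow> 'b graph \<Rightarrow> ('a \<Rightarrow> 'b) \<Rightarrow> bool" where
  "siso G H f \<longleftrightarrow> bij_betw f (verts G) (verts H) \<and> (image f) ` edges G = edges H"

definition wfg :: "'a graph \<Rightarrow> bool" where
  "wfg G \<longleftrightarrow> edges G \<subseteq> Pow (verts G)"

lemma siso_trans: "siso G H f \<Longrightarrow> siso H K g \<Longrightarrow> siso G K (g \<circ> f)"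
proof -
  assume a: "siso G H f" "siso H K g"
  have "(image (g \<circ> f)) ` edges G = (image g) ` (image f) ` edges G"
    by (simp add: image_image image_comp)
  then show ?thesis using a unfolding siso_def by (metis bij_betw_trans)
qed

lemma siso_sym:
  assumes s: "siso G H f" and w: "wfg G"
  shows "siso H G (inv_into (verts G) f)"
proof -
  have b: "bij_betw f (verts G) (verts H)" and e: "(image f) ` edges G = edges H"
    using s unfolding siso_def by blast+
  have i: "inj_on f (verts G)" using b unfolding bij_betw_def by blast
  have "(image (inv_into (verts G) f)) ` edges H = (\<lambda>x. inv_into (verts G) f ` f ` x) ` edges G"
    unfolding e[symmetric] by (simp only: image_image)
  also have "\<dots> = edges G"
  proof (rule image_cong[THEN trans, OF refl])
    show "inv_into (verts G) f ` f ` x = x" if "x \<in> edges G" for x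
      using inv_into_image_cancel[OF i] that w by (auto simp: wfg_def)
    show "(\<lambda>x. x) ` edges G = edges G" by simp
  qed
  finally show ?thesis using bij_betw_inv_into[OF b] by (simp add: siso_def)
qed

lemma siso_wfg: "siso G H f \<Longrightarrow> wfg G \<Longrightarrow> wfg H"
proof -
  assume s: "siso G H f" and w: "wfg G"
  have e: "(image f) ` edges G = edges H" using s unfolding siso_def by (rule conjunct2)
  have v: "f ` verts G = verts H" using s unfolding siso_def bij_betw_def by blast
  show "wfg H" unfolding wfg_def
  proof
    fix d assume "d \<in> edges H"
    then have "d \<in> (image f) ` edges G" using e by simp
    then obtain d0 where d0: "d0 \<in> edges G" "d = f ` d0" by blast
    have "d0 \<subseteq> verts G" using w d0(1) unfolding wfg_def by blast
    then have "f ` d0 \<subseteq> f ` verts G" by (rule image_mono)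
    then show "d \<in> Pow (verts H)" using d0(2) v by simp
  qed
qed

lemma siso_edge:
  assumes s: "siso G H f" and w: "wfg G" and x: "x \<in> verts G" and y: "y \<in> verts G"
  shows "{f x, f y} \<in> edges H \<longleftrightarrow> {x, y} \<in> edges G"
proof -
  have b: "bij_betw f (verts G) (verts H)" and e: "(image f) ` edges G = edges H"
    using s unfolding siso_def by blast+
  have i: "inj_on f (verts G)" using b unfolding bij_betw_def by blast
  show ?thesis
  proof
    assume "{f x, f y} \<in> edges H"
    then have "{f x, f y} \<in> (image f) ` edges G" using e by (simp only:)
    then obtain d where d0: "d \<in> edges G" "{f x, f y} = f ` d" by (rule imageE)
    then have d: "d \<in> edges G" "f ` d = f ` {x, y}" by simp_all
    have "d \<subseteq> verts G" using d(1) w unfolding wfg_def by blast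
    moreover have "{x, y} \<subseteq> verts G" using x y by simp
    ultimately have "d = {x, y}" using inj_on_image_eq_iff[OF i] d(2) by metis
    then show "{x, y} \<in> edges G" using d by simp
  next
    assume "{x, y} \<in> edges G"
    then have "f ` {x, y} \<in> (image f) ` edges G" by (rule imageI)
    then show "{f x, f y} \<in> edges H" using e by simp
  qed
qed

lemma siso_graph_iso: "siso G H f \<Longrightarrow> wfg G \<Longrightarrow> graph_iso G H"
  unfolding graph_iso_def
  apply (rule exI[of _ f])
  apply (intro conjI ballI)
   apply (unfold siso_def, blast)[1]
  using siso_edge by metis

lemma degree_siso:
  assumes s: "siso G H f" and w: "wfg G" and x: "x \<in> verts G"
  shows "degree H (f x) = degree G x"
proof -
  have b: "bij_betw f (verts G) (verts H)" and e: "(image f) ` edges G = edges H"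
    using s unfolding siso_def by blast+
  have i: "inj_on f (verts G)" using b unfolding bij_betw_def by blast
  have ii: "inj_on (image f) {d \<in> edges G. x \<in> d}"
  proof (rule inj_onI)
    fix d1 d2 assume a: "d1 \<in> {d \<in> edges G. x \<in> d}" "d2 \<in> {d \<in> edges G. x \<in> d}" "f ` d1 = f ` d2"
    have "d1 \<subseteq> verts G" "d2 \<subseteq> verts G" using a(1,2) w unfolding wfg_def by blast+
    then show "d1 = d2" using inj_on_image_eq_iff[OF i] a(3) by metis
  qed
  have "{d \<in> edges H. f x \<in> d} = (image f) ` {d \<in> edges G. x \<in> d}"
  proof
    show "{d \<in> edges H. f x \<in> d} \<subseteq> (image f) ` {d \<in> edges G. x \<in> d}"
    proof
      fix d assume d: "d \<in> {d \<in> edges H. f x \<in> d}"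
      then have "d \<in> (image f) ` edges G" using e by simp
      then obtain d0 where d0: "d0 \<in> edges G" "d = f ` d0" by (rule imageE)
      have fx: "f x \<in> f ` d0" using d d0 by simp
      have "d0 \<subseteq> verts G" using d0(1) w unfolding wfg_def by blast
      then have "x \<in> d0" using fx i x unfolding inj_on_def by blast
      then show "d \<in> (image f) ` {d \<in> edges G. x \<in> d}" using d0 by blast
    qed
    show "(image f) ` {d \<in> edges G. x \<in> d} \<subseteq> {d \<in> edges H. f x \<in> d}"
    proof
      fix d assume "d \<in> (image f) ` {d \<in> edges G. x \<in> d}"
      then obtain d0 where d0: "d0 \<in> edges G" "x \<in> d0" "d = f ` d0" by blast
      have "f ` d0 \<in> (image f) ` edges G" using d0(1) by (rule imageI)
      then show "d \<in> {d \<in> edges H. f x \<in> d}" using e d0 by simp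
    qed
  qed
  then have "card {d \<in> edges H. f x \<in> d} = card {d \<in> edges G. x \<in> d}"
    using card_image[OF ii] by simp
  then show ?thesis unfolding degree_def .
qed

lemma walk_siso:
  assumes s: "siso G H f" and w: "wfg G"
  shows "walk H ys \<Longrightarrow> walk G (map (inv_into (verts G) f) ys)"
proof -
  assume wk: "walk H ys"
  have s2: "siso H G (inv_into (verts G) f)" by (rule siso_sym[OF s w])
  let ?g = "inv_into (verts G) f"
  have b: "bij_betw ?g (verts H) (verts G)" and e: "(image ?g) ` edges H = edges G"
    using s2 unfolding siso_def by blast+
  have gv: "?g ` verts H = verts G" using b unfolding bij_betw_def by blast
  show ?thesis
    unfolding walk_def
  proof (intro conjI allI impI)
    show "map ?g ys \<noteq> []" using wk unfolding walk_def by simp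
    have "set ys \<subseteq> verts H" using wk unfolding walk_def by blast
    then have "?g ` set ys \<subseteq> ?g ` verts H" by (rule image_mono)
    then show "set (map ?g ys) \<subseteq> verts G" using gv by simp
    fix i assume "Suc i < length (map ?g ys)"
    then have l: "Suc i < length ys" by simp
    then have "{ys ! i, ys ! Suc i} \<in> edges H" using wk unfolding walk_def by blast
    then have "?g ` {ys ! i, ys ! Suc i} \<in> (image ?g) ` edges H" by (rule imageI)
    then have "?g ` {ys ! i, ys ! Suc i} \<in> edges G" using e by simp
    then show "{map ?g ys ! i, map ?g ys ! Suc i} \<in> edges G" using l by simp
  qed
qed

lemma path_siso:
  assumes s: "siso G H f" and w: "wfg G" and u: "u \<in> verts G" and v: "v \<in> verts G"
    and p: "path H (f u) (f v) k"
  shows "path G u v k"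
proof -
  obtain ys where y: "walk H ys" "hd ys = f u" "last ys = f v" "length ys \<le> Suc k"
    using p unfolding path_def by blast
  have ne: "ys \<noteq> []" using y unfolding walk_def by simp
  have i: "inj_on f (verts G)" using s unfolding siso_def bij_betw_def by blast
  have "walk G (map (inv_into (verts G) f) ys)" using walk_siso[OF s w y(1)] .
  moreover have "hd (map (inv_into (verts G) f) ys) = u" using ne y(2) i u by (simp add: hd_map)
  moreover have "last (map (inv_into (verts G) f) ys) = v" using ne y(3) i v by (simp add: last_map)
  moreover have "length (map (inv_into (verts G) f) ys) \<le> Suc k" using y(4) by simp
  ultimately show ?thesis unfolding path_def by blast
qed


lemma star_leaf:
  assumes st: "is_star3 S" and l: "l \<in> verts S" and dl: "degree S l = 1"
  shows "\<exists>c a b d. distinct [c, a, b, d] \<and> verts S = {c, a, b, d} \<and>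
      edges S = {{c, a}, {c, b}, {c, d}} \<and> l = a"
proof -
  obtain c a b d where cabd0: "distinct [c, a, b, d] \<and> verts S = {c, a, b, d} \<and>
      edges S = {{c, a}, {c, b}, {c, d}}" using st[unfolded is_star3_def] by (elim exE) (rule that)
  note cabd = conjunct1[OF cabd0] conjunct1[OF conjunct2[OF cabd0]] conjunct2[OF conjunct2[OF cabd0]]
  have "\<forall>e\<in>edges S. c \<in> e" using cabd(3) by simp
  then have "{e \<in> edges S. c \<in> e} = edges S" by blast
  then have "{e \<in> edges S. c \<in> e} = {{c, a}, {c, b}, {c, d}}" using cabd(3) by simp
  moreover have "card {{c, a}, {c, b}, {c, d}} = 3" using cabd(1) by (simp add: doubleton_eq_iff)
  ultimately have "degree S c = 3" unfolding degree_def by simp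
  then have "l \<noteq> c" using dl by auto
  then have "l = a \<or> l = b \<or> l = d" using l cabd(2) by auto
  then show ?thesis
  proof (elim disjE)
    assume "l = a" then show ?thesis using cabd by (intro exI[of _ c] exI[of _ a] exI[of _ b] exI[of _ d]) simp
  next
    assume lb: "l = b"
    have "distinct [c, b, a, d]" using cabd(1) by auto
    moreover have "verts S = {c, b, a, d}" using cabd(2) by auto
    moreover have "edges S = {{c, b}, {c, a}, {c, d}}" using cabd(3) by (simp add: insert_commute)
    ultimately show ?thesis using lb by (intro exI[of _ c] exI[of _ b] exI[of _ a] exI[of _ d]) simp
  next
    assume ld: "l = d"
    have "distinct [c, d, b, a]" using cabd(1) by auto
    moreover have "verts S = {c, d, b, a}" using cabd(2) by auto
    moreover have "edges S = {{c, d}, {c, b}, {c, a}}" using cabd(3) by (simp add: insert_commute)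
    ultimately show ?thesis using ld by (intro exI[of _ c] exI[of _ d] exI[of _ b] exI[of _ a]) simp
  qed
qed

lemma star_base:
  assumes st: "is_star3 S"
  shows "\<exists>h. siso S (gr 4 [(0,1),(0,2),(0,3)]) h \<and> wfg S"
proof -
  obtain c a b d where cabd0: "distinct [c, a, b, d] \<and> verts S = {c, a, b, d} \<and>
      edges S = {{c, a}, {c, b}, {c, d}}" using st[unfolded is_star3_def] by (elim exE) (rule that)
  note cabd = conjunct1[OF cabd0] conjunct1[OF conjunct2[OF cabd0]] conjunct2[OF conjunct2[OF cabd0]]
  define h :: "_ \<Rightarrow> nat" where "h x = (if x = c then 0 else if x = a then 1 else if x = b then 2 else 3)" for x
  have hv: "h c = 0" "h a = 1" "h b = 2" "h d = 3" using cabd(1) by (auto simp: h_def)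
  have inj: "inj_on h {c, a, b, d}" unfolding inj_on_def using hv by auto
  have four: "{0..<4::nat} = {0, 1, 2, 3}" by auto
  have img: "h ` {c, a, b, d} = {0..<4}" using hv four by auto
  have "bij_betw h (verts S) (verts (gr 4 [(0,1),(0,2),(0,3)]))"
    unfolding bij_betw_def using inj img cabd(2) by simp
  moreover have "(image h) ` edges S = edges (gr 4 [(0,1),(0,2),(0,3)])"
    using cabd(3) hv by (simp add: mk_def)
  moreover have "wfg S" unfolding wfg_def using cabd(2,3) by simp
  ultimately show ?thesis unfolding siso_def by blast
qed


lemma attach_step:
  fixes G H :: "'a graph" and S :: "'s graph"
  assumes att: "attach G v S H" and st: "is_star3 S" and sg: "siso G (gr n es) h" and wg: "wfg G"
  shows "\<exists>k. siso H (gr (n + 3) (es @ [(h v, n), (n, Suc n), (n, Suc (Suc n))])) k \<and> wfg H \<and> h v < n"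
proof -
  have vG: "v \<in> verts G" using att unfolding attach_def by blast
  obtain f g l where fgl0: "inj_on f (verts G) \<and> inj_on g (verts S) \<and> l \<in> verts S \<and> degree S l = 1 \<and>
        g l = f v \<and> f ` verts G \<inter> g ` verts S = {f v} \<and>
        verts H = f ` verts G \<union> g ` verts S \<and>
        edges H = (image f) ` edges G \<union> (image g) ` edges S"
    using att[unfolded attach_def, THEN conjunct2] by (elim exE) (rule that)
  note fgl = fgl0[THEN conjunct1] fgl0[THEN conjunct2, THEN conjunct1]
    fgl0[THEN conjunct2, THEN conjunct2, THEN conjunct1]
    fgl0[THEN conjunct2, THEN conjunct2, THEN conjunct2, THEN conjunct1]
    fgl0[THEN conjunct2, THEN conjunct2, THEN conjunct2, THEN conjunct2, THEN conjunct1]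
    fgl0[THEN conjunct2, THEN conjunct2, THEN conjunct2, THEN conjunct2, THEN conjunct2, THEN conjunct1]
    fgl0[THEN conjunct2, THEN conjunct2, THEN conjunct2, THEN conjunct2, THEN conjunct2, THEN conjunct2, THEN conjunct1]
    fgl0[THEN conjunct2, THEN conjunct2, THEN conjunct2, THEN conjunct2, THEN conjunct2, THEN conjunct2, THEN conjunct2]
  have fi: "inj_on f (verts G)" and gi: "inj_on g (verts S)" and lS: "l \<in> verts S"
    and dl: "degree S l = 1" and gl: "g l = f v" and int: "f ` verts G \<inter> g ` verts S = {f v}"
    and VH: "verts H = f ` verts G \<union> g ` verts S"
    and EH: "edges H = (image f) ` edges G \<union> (image g) ` edges S" using fgl by blast+
  obtain c a b d where cabd0: "distinct [c, a, b, d] \<and> verts S = {c, a, b, d} \<and>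
      edges S = {{c, a}, {c, b}, {c, d}} \<and> l = a" using star_leaf[OF st lS dl] by (elim exE) (rule that)
  have dis: "distinct [c, a, b, d]" and VS: "verts S = {c, a, b, d}"
    and ES: "edges S = {{c, a}, {c, b}, {c, d}}" and la: "l = a" using cabd0 by blast+
  have hb: "bij_betw h (verts G) {0..<n}" and he: "(image h) ` edges G = mk ` set es"
    using sg unfolding siso_def by simp_all
  have hi: "inj_on h (verts G)" and himg: "h ` verts G = {0..<n}" using hb unfolding bij_betw_def by blast+
  let ?F = "f ` verts G"
  have ga: "g a = f v" using gl la by simp
  have gne: "g x \<notin> ?F" if "x \<in> verts S" "x \<noteq> a" for x
  proof
    assume "g x \<in> ?F"
    then have "g x \<in> ?F \<inter> g ` verts S" using that by blast
    then have "g x \<in> {f v}" using int by (simp only:)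
    then have "g x = g a" using ga by simp
    then show False using gi that VS unfolding inj_on_def by auto
  qed
  have gc: "g c \<notin> ?F" and gb: "g b \<notin> ?F" and gd: "g d \<notin> ?F"
    using gne dis VS by auto
  have gcb: "g c \<noteq> g b" and gcd: "g c \<noteq> g d" and gbd: "g b \<noteq> g d"
    using gi dis VS unfolding inj_on_def by auto
  define k where "k y = (if y \<in> ?F then h (inv_into (verts G) f y)
      else if y = g c then n else if y = g b then Suc n else Suc (Suc n))" for y
  have kf: "k (f x) = h x" if "x \<in> verts G" for x
    using that fi by (simp add: k_def)
  have kga: "k (g a) = h v" using ga kf vG by simp
  have kgc: "k (g c) = n" using gc by (simp add: k_def)
  have kgb: "k (g b) = Suc n" using gb gcb by (simp add: k_def)
  have kgd: "k (g d) = Suc (Suc n)" using gd gcd gbd by (simp add: k_def)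
  have VH2: "verts H = ?F \<union> {g c, g b, g d}"
    using VH VS ga vG by auto
  have kF: "k ` ?F = {0..<n}"
  proof -
    have "k ` ?F = h ` verts G" using kf by (auto simp: image_image)
    then show ?thesis using himg by simp
  qed
  have kinjF: "inj_on k ?F"
  proof (rule inj_onI)
    fix y1 y2 assume y: "y1 \<in> ?F" "y2 \<in> ?F" "k y1 = k y2"
    then obtain x1 x2 where x: "x1 \<in> verts G" "x2 \<in> verts G" "y1 = f x1" "y2 = f x2" by blast
    then have "h x1 = h x2" using y(3) kf by simp
    then have "x1 = x2" using hi x unfolding inj_on_def by blast
    then show "y1 = y2" using x by simp
  qed
  have k3: "k ` {g c, g b, g d} = {n, Suc n, Suc (Suc n)}" using kgc kgb kgd by simp
  have kinj3: "inj_on k {g c, g b, g d}" using kgc kgb kgd unfolding inj_on_def by auto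
  have kinj: "inj_on k (verts H)"
    unfolding VH2
  proof (rule inj_on_Un[THEN iffD2], intro conjI)
    show "inj_on k ?F" by (rule kinjF)
    show "inj_on k {g c, g b, g d}" by (rule kinj3)
    have d1: "?F - {g c, g b, g d} = ?F" using gc gb gd by blast
    have d2: "{g c, g b, g d} - ?F = {g c, g b, g d}" using gc gb gd by auto
    have "{0..<n} \<inter> {n, Suc n, Suc (Suc n)} = {}" by auto
    then show "k ` (?F - {g c, g b, g d}) \<inter> k ` ({g c, g b, g d} - ?F) = {}"
      unfolding d1 d2 kF k3 .
  qed
  have kimg: "k ` verts H = {0..<n + 3}"
  proof -
    have "k ` verts H = {0..<n} \<union> {n, Suc n, Suc (Suc n)}" unfolding VH2 image_Un kF k3 by simp
    also have "\<dots> = {0..<n + 3}" by auto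
    finally show ?thesis .
  qed
  have E1: "(image k) ` (image f) ` edges G = mk ` set es"
  proof -
    have "(image k) ` (image f) ` edges G = (\<lambda>e. k ` f ` e) ` edges G" by (simp add: image_image)
    also have "\<dots> = (image h) ` edges G"
    proof (rule image_cong[OF refl])
      fix e assume "e \<in> edges G"
      then have "e \<subseteq> verts G" using wg unfolding wfg_def by blast
      then show "k ` f ` e = h ` e" using kf by (force simp: image_image)
    qed
    finally have "(image k) ` (image f) ` edges G = (image h) ` edges G" .
    then show ?thesis using he by simp
  qed
  have E2: "(image k) ` (image g) ` edges S = {{h v, n}, {n, Suc n}, {n, Suc (Suc n)}}"
    using kga kgb kgc kgd by (simp add: ES insert_commute)
  have "(image k) ` edges H = mk ` set es \<union> {{h v, n}, {n, Suc n}, {n, Suc (Suc n)}}"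
    unfolding EH image_Un E1 E2 ..
  also have "\<dots> = edges (gr (n + 3) (es @ [(h v, n), (n, Suc n), (n, Suc (Suc n))]))"
    by (simp add: mk_def Un_commute insert_commute)
  finally have ek: "(image k) ` edges H = edges (gr (n + 3) (es @ [(h v, n), (n, Suc n), (n, Suc (Suc n))]))" .
  have bk: "bij_betw k (verts H) (verts (gr (n + 3) (es @ [(h v, n), (n, Suc n), (n, Suc (Suc n))])))"
    unfolding bij_betw_def using kinj kimg by simp
  have wH: "wfg H"
    unfolding wfg_def
  proof
    fix e assume "e \<in> edges H"
    then have "e \<in> (image f) ` edges G \<or> e \<in> (image g) ` edges S" using EH by simp
    then show "e \<in> Pow (verts H)"
    proof
      assume "e \<in> (image f) ` edges G"
      then obtain e0 where e0: "e0 \<in> edges G" "e = f ` e0" by (rule imageE)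
      have "e0 \<subseteq> verts G" using e0(1) wg unfolding wfg_def by blast
      then have "f ` e0 \<subseteq> ?F" by (rule image_mono)
      then show ?thesis using e0(2) VH by blast
    next
      assume "e \<in> (image g) ` edges S"
      then obtain e0 where e0: "e0 \<in> edges S" "e = g ` e0" by (rule imageE)
      have "e0 \<subseteq> verts S" using e0(1) ES VS by auto
      then have "g ` e0 \<subseteq> g ` verts S" by (rule image_mono)
      then show ?thesis using e0(2) VH by blast
    qed
  qed
  have "h v \<in> h ` verts G" using vG by (rule imageI)
  then have "h v < n" using himg by simp
  then show ?thesis using bk ek wH unfolding siso_def by blast
qed


lemma chain:
  assumes "star_chain3 Z"
  shows "\<exists>v0 v1 v2 k. v0 < 4 \<and> v1 < 7 \<and> v2 < 10 \<and> siso Z (gr 13 (esC v0 v1 v2)) k \<and> wfg Z"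
proof -
  obtain S0 S1 S2 S3 :: "'a graph" and G0 G1 G2 v0 v1 v2 where
    a: "is_star3 S0 \<and> is_star3 S1 \<and> is_star3 S2 \<and> is_star3 S3 \<and>
      G0 = S0 \<and> attach G0 v0 S1 G1 \<and> attach G1 v1 S2 G2 \<and> attach G2 v2 S3 Z"
    using assms[unfolded star_chain3_def] by (elim exE) (rule that)
  have s0: "is_star3 S0" using a by (elim conjE) assumption
  have s1: "is_star3 S1" using a by (elim conjE) assumption
  have s2: "is_star3 S2" using a by (elim conjE) assumption
  have s3: "is_star3 S3" using a by (elim conjE) assumption
  have g0: "G0 = S0" using a by (elim conjE) assumption
  have a1: "attach G0 v0 S1 G1" using a by (elim conjE) assumption
  have a2: "attach G1 v1 S2 G2" using a by (elim conjE) assumption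
  have a3: "attach G2 v2 S3 Z" using a by (elim conjE) assumption
  obtain h0 where h0: "siso G0 (gr 4 [(0,1),(0,2),(0,3)]) h0" "wfg G0" using star_base[OF s0] g0 by blast
  obtain h1 where h1: "siso G1 (gr (4 + 3) ([(0,1),(0,2),(0,3)] @ [(h0 v0, 4), (4, Suc 4), (4, Suc (Suc 4))])) h1"
      "wfg G1" "h0 v0 < 4"
    using attach_step[OF a1 s1 h0(1) h0(2)] by blast
  let ?e1 = "[(0,1),(0,2),(0,3)] @ [(h0 v0, 4), (4, Suc 4), (4, Suc (Suc 4))]"
  obtain h2 where h2: "siso G2 (gr (4 + 3 + 3) (?e1 @ [(h1 v1, 4 + 3), (4 + 3, Suc (4 + 3)), (4 + 3, Suc (Suc (4 + 3)))])) h2"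
      "wfg G2" "h1 v1 < 4 + 3"
    using attach_step[OF a2 s2 h1(1) h1(2)] by blast
  let ?e2 = "?e1 @ [(h1 v1, 4 + 3), (4 + 3, Suc (4 + 3)), (4 + 3, Suc (Suc (4 + 3)))]"
  obtain h3 where h3: "siso Z (gr (4 + 3 + 3 + 3) (?e2 @ [(h2 v2, 4 + 3 + 3), (4 + 3 + 3, Suc (4 + 3 + 3)), (4 + 3 + 3, Suc (Suc (4 + 3 + 3)))])) h3"
      "wfg Z" "h2 v2 < 4 + 3 + 3"
    using attach_step[OF a3 s3 h2(1) h2(2)] by blast
  have eq: "gr (4 + 3 + 3 + 3) (?e2 @ [(h2 v2, 4 + 3 + 3), (4 + 3 + 3, Suc (4 + 3 + 3)), (4 + 3 + 3, Suc (Suc (4 + 3 + 3)))])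
     = gr 13 (esC (h0 v0) (h1 v1) (h2 v2))" by (simp add: esC_def)
  show ?thesis using h1(3) h2(3) h3 eq by (intro exI[of _ "h0 v0"] exI[of _ "h1 v1"] exI[of _ "h2 v2"] exI[of _ h3]) simp
qed

lemma bnd_esC: "v0 < 13 \<Longrightarrow> v1 < 13 \<Longrightarrow> v2 < 13 \<Longrightarrow> \<forall>p\<in>set (esC v0 v1 v2). fst p < 13 \<and> snd p < 13"
  by (simp add: esC_def)

lemma chk2_get: "chk2 v0 v1 xs \<Longrightarrow> v2 \<in> set xs \<Longrightarrow> checkall v0 v1 v2"
  by (induction xs) auto

lemma chk1_get: "chk1 v0 xs \<Longrightarrow> v1 \<in> set xs \<Longrightarrow> chk2 v0 v1 [0..<10]"
  by (induction xs) auto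

lemma chk_get: "v0 < 4 \<Longrightarrow> v1 < 7 \<Longrightarrow> v2 < 10 \<Longrightarrow> checkall v0 v1 v2"
proof -
  assume a: "v0 < 4" "v1 < 7" "v2 < 10"
  have "chk1 v0 [0..<7]"
  proof -
    have "v0 = 0 \<or> v0 = 1 \<or> v0 = 2 \<or> v0 = 3" using a(1) by auto
    then show ?thesis using chk_0 chk_1 chk_2 chk_3 by auto
  qed
  then have "chk2 v0 v1 [0..<10]" using chk1_get a(2) by simp
  then show ?thesis using chk2_get a(3) by simp
qed

lemma degcnt_le:
  assumes "x < n"
  shows "degcnt x es \<le> degree (gr n es) x"
proof -
  have sub: "set (map mk (filter (\<lambda>p. fst p = x \<or> snd p = x) es)) \<subseteq> {e \<in> edges (gr n es). x \<in> e}"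
    by (auto simp: mk_def)
  have fin: "finite {e \<in> edges (gr n es). x \<in> e}" by simp
  show ?thesis unfolding degcnt_def degree_def using card_mono[OF fin sub] .
qed

lemma degL_ex: "degL es xs \<Longrightarrow> \<exists>x\<in>set xs. 4 \<le> degcnt x es"
  by (induction xs) auto

lemma nrm_mk: "mk (nrm q) = mk q"
  by (auto simp: mk_def nrm_def min_def max_def)

lemma emap_set: "mk ` set (emap p es) = (\<lambda>q. {p ! fst q, p ! snd q}) ` set es"
proof (induction es)
  case Nil
  then show ?case by simp
next
  case (Cons q es)
  obtain a b where q: "q = (a, b)" by (cases q)
  have "mk (nrm (p ! a, p ! b)) = {p ! a, p ! b}" by (simp only: nrm_mk) (simp add: mk_def)
  then show ?case using Cons q by simp
qed

lemma iso_from_check: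
  assumes ic: "isocheck p es" and bnd: "\<forall>q\<in>set es. fst q < 13 \<and> snd q < 13"
  shows "siso (gr 13 es) (gr 13 (esC 1 5 8)) (\<lambda>x. p ! x)"
proof -
  have len: "length p = 13" and a1: "allin p [0..<13]" and a2: "allin [0..<13] p"
    and a3: "allin (emap p es) (emap [0..<13] (esC 1 5 8))"
    and a4: "allin (emap [0..<13] (esC 1 5 8)) (emap p es)"
    using ic[unfolded isocheck_def, THEN conjunct1]
      ic[unfolded isocheck_def, THEN conjunct2, THEN conjunct1]
      ic[unfolded isocheck_def, THEN conjunct2, THEN conjunct2, THEN conjunct1]
      ic[unfolded isocheck_def, THEN conjunct2, THEN conjunct2, THEN conjunct2, THEN conjunct1]
      ic[unfolded isocheck_def, THEN conjunct2, THEN conjunct2, THEN conjunct2, THEN conjunct2]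
    by - assumption+
  have s1: "set p \<subseteq> set [0..<13]" using a1 unfolding allin_iff .
  have s2: "set [0..<13] \<subseteq> set p" using a2 unfolding allin_iff .
  have sp: "set p = {0..<13}" using s1 s2 by simp
  have "card (set p) = length p" using sp len by simp
  then have dp: "distinct p" by (rule card_distinct)
  have bj: "bij_betw ((!) p) {..<length p} (set p)" by (rule bij_betw_nth[OF dp refl refl])
  then have bj1: "bij_betw ((!) p) {0..<13} {0..<13}" unfolding len sp lessThan_atLeast0 .
  have bj2: "bij_betw (\<lambda>x. p ! x) (verts (gr 13 es)) (verts (gr 13 (esC 1 5 8)))"
    unfolding gr_simps using bj1 by simp
  have e1: "set (emap p es) \<subseteq> set (emap [0..<13] (esC 1 5 8))" using a3 unfolding allin_iff .
  have e2: "set (emap [0..<13] (esC 1 5 8)) \<subseteq> set (emap p es)" using a4 unfolding allin_iff .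
  have "set (emap p es) = set (emap [0..<13] (esC 1 5 8))" using e1 e2 by (rule subset_antisym)
  then have "mk ` set (emap p es) = mk ` set (emap [0..<13] (esC 1 5 8))" by simp
  then have "(\<lambda>q. {p ! fst q, p ! snd q}) ` set es = (\<lambda>q. {[0..<13] ! fst q, [0..<13] ! snd q}) ` set (esC 1 5 8)"
    unfolding emap_set .
  also have "\<dots> = mk ` set (esC 1 5 8)"
  proof (rule image_cong[OF refl])
    fix q assume "q \<in> set (esC 1 5 8)"
    then have "fst q < 13" "snd q < 13" using bnd_esC[of 1 5 8] by auto
    then show "{[0..<13] ! fst q, [0..<13] ! snd q} = mk q" by (simp add: mk_def)
  qed
  finally have f1: "(\<lambda>q. {p ! fst q, p ! snd q}) ` set es = mk ` set (esC 1 5 8)" .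
  have f2: "(image (\<lambda>x. p ! x)) ` mk ` set es = (\<lambda>q. {p ! fst q, p ! snd q}) ` set es"
    by (simp add: image_image mk_def)
  have "(image (\<lambda>x. p ! x)) ` edges (gr 13 es) = edges (gr 13 (esC 1 5 8))"
    unfolding gr_simps f2 f1 ..
  then show ?thesis using bj2 unfolding siso_def by (intro conjI)
qed

lemma diam_small:
  assumes s: "siso Z (gr 13 es) k" and w: "wfg Z"
    and p: "\<And>u w. u < 13 \<Longrightarrow> w < 13 \<Longrightarrow> path (gr 13 es) u w 7"
  shows "diameter Z \<le> 7"
proof -
  have b: "bij_betw k (verts Z) {0..<13}" using s unfolding siso_def gr_simps by (rule conjunct1)
  have kimg: "k ` verts Z = {0..<13}" using b unfolding bij_betw_def by (rule conjunct2)
  have fin: "finite (verts Z)" using bij_betw_finite[OF b] by simp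
  have ne: "verts Z \<noteq> {}"
  proof
    assume "verts Z = {}"
    then have "k ` verts Z = {}" by simp
    then show False using kimg by simp
  qed
  have kin: "k x < 13" if "x \<in> verts Z" for x
  proof -
    have "k x \<in> k ` verts Z" using that by (rule imageI)
    then show ?thesis using kimg by simp
  qed
  have dl: "dist Z u v \<le> 7" if "u \<in> verts Z" "v \<in> verts Z" for u v
    using dist_le[OF path_siso[OF s w that p[OF kin[OF that(1)] kin[OF that(2)]]]] .
  define D where "D = {dist Z u v | u v. u \<in> verts Z \<and> v \<in> verts Z}"
  define F where "F = (\<lambda>q. dist Z (fst q) (snd q)) ` (verts Z \<times> verts Z)"
  have "D \<subseteq> F"
  proof
    fix x assume "x \<in> D"
    then obtain u v where uv: "x = dist Z u v" "u \<in> verts Z" "v \<in> verts Z" unfolding D_def by blast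
    have "(u, v) \<in> verts Z \<times> verts Z" using uv(2,3) by (rule SigmaI)
    then have "(\<lambda>q. dist Z (fst q) (snd q)) (u, v) \<in> F" unfolding F_def by (rule imageI)
    then show "x \<in> F" using uv(1) by simp
  qed
  moreover have "finite F" unfolding F_def using fin by simp
  ultimately have fD: "finite D" by (rule finite_subset)
  obtain u0 where u0: "u0 \<in> verts Z" using ne by blast
  have "dist Z u0 u0 \<in> D" unfolding D_def using u0 by blast
  then have nD: "D \<noteq> {}" by blast
  have "Max D \<in> D" using Max_in[OF fD nD] .
  then have "\<exists>u v. Max D = dist Z u v \<and> u \<in> verts Z \<and> v \<in> verts Z" unfolding D_def by (rule CollectD)
  then obtain u v where uv: "Max D = dist Z u v" "u \<in> verts Z" "v \<in> verts Z" by (elim exE conjE)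
  have "Max D \<le> 7" unfolding uv(1) by (rule dl[OF uv(2) uv(3)])
  moreover have "diameter Z = Max D" unfolding diameter_def D_def by (rule refl)
  ultimately show ?thesis by (simp only:)
qed

lemma to_iso:
  assumes s: "siso Z (gr 13 (esC v0 v1 v2)) k" and w: "wfg Z"
    and v: "v0 < 4" "v1 < 7" "v2 < 10"
    and md: "max_degree_le Z 3" and dm: "diameter Z = 8"
  shows "\<exists>q. siso (gr 13 (esC v0 v1 v2)) (gr 13 (esC 1 5 8)) q"
proof -
  have ck: "checkall v0 v1 v2" using chk_get v by blast
  have bnd: "\<forall>q\<in>set (esC v0 v1 v2). fst q < 13 \<and> snd q < 13" by (rule bnd_esC) (use v in auto)
  show ?thesis
  proof (cases "map_of wtab (v0, v1, v2)")
    case (Some p)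
    then have "isocheck p (esC v0 v1 v2)" using ck unfolding checkall_def by simp
    then show ?thesis using iso_from_check bnd by blast
  next
    case None
    note N1 = None
    show ?thesis
    proof (cases "map_of ctab (v0, v1, v2)")
      case (Some z)
      then have "ccheck (esC v0 v1 v2) z" using ck N1 unfolding checkall_def by simp
      then have "diameter Z \<le> 7"
        by (intro diam_small[OF s w] center_path[OF bnd])
      then show ?thesis using dm by simp
    next
      case None
      then have "degL (esC v0 v1 v2) [0..<13]" using ck N1 unfolding checkall_def by simp
      then have "\<exists>x\<in>set [0..<13]. 4 \<le> degcnt x (esC v0 v1 v2)" by (rule degL_ex)
      then obtain x where x0: "x \<in> set [0..<13]" "4 \<le> degcnt x (esC v0 v1 v2)" by (rule bexE)
      have x: "x < 13" "4 \<le> degcnt x (esC v0 v1 v2)" using x0 by simp_all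
      have "degcnt x (esC v0 v1 v2) \<le> degree (gr 13 (esC v0 v1 v2)) x" by (rule degcnt_le[OF x(1)])
      then have "4 \<le> degree (gr 13 (esC v0 v1 v2)) x" using x(2) by linarith
      moreover have "k ` verts Z = {0..<13}" using s unfolding siso_def bij_betw_def gr_simps by (elim conjE)
      then have "x \<in> k ` verts Z" using x(1) by simp
      then obtain z where z: "z \<in> verts Z" "x = k z" by blast
      ultimately have "4 \<le> degree Z z" using degree_siso[OF s w z(1)] by simp
      then show ?thesis using md z(1) unfolding max_degree_le_def by fastforce
    qed
  qed
qed

theorem mainTheorem14:
  fixes Z :: "'a graph" and Z' :: "'b graph"
  assumes "star_chain3 Z" and "max_degree_le Z 3" and "diameter Z = 8"
      and "star_chain3 Z'" and "max_degree_le Z' 3" and "diameter Z' = 8"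
  shows "graph_iso Z Z'"
proof -
  obtain v0 v1 v2 k where a: "v0 < 4" "v1 < 7" "v2 < 10" "siso Z (gr 13 (esC v0 v1 v2)) k" "wfg Z"
    using chain[OF assms(1)] by blast
  obtain w0 w1 w2 k' where b: "w0 < 4" "w1 < 7" "w2 < 10" "siso Z' (gr 13 (esC w0 w1 w2)) k'" "wfg Z'"
    using chain[OF assms(4)] by blast
  obtain q where q: "siso (gr 13 (esC v0 v1 v2)) (gr 13 (esC 1 5 8)) q"
    using to_iso[OF a(4) a(5) a(1-3) assms(2,3)] by blast
  obtain q' where q': "siso (gr 13 (esC w0 w1 w2)) (gr 13 (esC 1 5 8)) q'"
    using to_iso[OF b(4) b(5) b(1-3) assms(5,6)] by blast
  have zz: "siso Z (gr 13 (esC 1 5 8)) (q \<circ> k)" by (rule siso_trans[OF a(4) q])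
  have zz': "siso Z' (gr 13 (esC 1 5 8)) (q' \<circ> k')" by (rule siso_trans[OF b(4) q'])
  have "siso (gr 13 (esC 1 5 8)) Z' (inv_into (verts Z') (q' \<circ> k'))" by (rule siso_sym[OF zz' b(5)])
  then have "siso Z Z' (inv_into (verts Z') (q' \<circ> k') \<circ> (q \<circ> k))" by (rule siso_trans[OF zz])
  then show ?thesis using siso_graph_iso a(5) by blast
qed

end
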